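(* Fix $A>0$ and, for $q\in[1,\infty]$, let $v_q=\sup\{y_V(1): V\in L^q[0,1],\ \|V\|_{L^q}\le A\}$. Then $q\mapsto v_q$ is non-increasing on $[1,\infty]$, and $v_q\to v_1$ as $q\to1^+$.
   Context: For real-valued $V\in L^q[0,1]$, $y_V$ denotes the solution of $-y''+Vy=0$ on $[0,1]$ with $y(0)=0$, $y'(0)=1$. Solutions are understood in the Carathéodory sense: $y_V,y_V'$ are absolutely continuous, and the equation holds a.e. *)

theory Defs
  imports "HOL-Analysis.Analysis" "HOL-Probability.Probability"
begin

abbreviation I01 :: "real measure" where "I01 \<equiv> lebesgue_on {0..1}"

definition in_Lq :: "ereal \<Rightarrow> (real \<Rightarrow> real) \<Rightarrow> bool" where
  "in_Lq q V \<longleftrightarrow> V \<in> borel_measurable I01 \<and>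
     (if q = \<infinity> then esssup I01 (\<lambda>x. ereal \<bar>V x\<bar>) < \<infinity>
      else integrable I01 (\<lambda>x. \<bar>V x\<bar> powr real_of_ereal q))"

definition Lq_norm :: "ereal \<Rightarrow> (real \<Rightarrow> real) \<Rightarrow> real" where
  "Lq_norm q V =
     (if q = \<infinity> then real_of_ereal (esssup I01 (\<lambda>x. ereal \<bar>V x\<bar>))
      else (integral\<^sup>L I01 (\<lambda>x. \<bar>V x\<bar> powr real_of_ereal q)) powr (1 / real_of_ereal q))"

text \<open>Carath\'eodory solution of -y'' + V y = 0 on [0,1], y(0)=0, y'(0)=1,
  written in the equivalent integral form: y' = z, where z is absolutely continuous
  with z' = V y a.e., i.e. y(t) = \<int>_0^t z and z(t) = 1 + \<int>_0^t V y.\<close>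
definition is_sol :: "(real \<Rightarrow> real) \<Rightarrow> (real \<Rightarrow> real) \<Rightarrow> bool" where
  "is_sol V y \<longleftrightarrow> (\<exists>z. continuous_on {0..1} y \<and> continuous_on {0..1} z \<and>
     y 0 = 0 \<and> z 0 = 1 \<and>
     (\<lambda>s. V s * y s) absolutely_integrable_on {0..1} \<and>
     (\<forall>t\<in>{0..1}. (z has_integral (y t - y 0)) {0..t}) \<and>
     (\<forall>t\<in>{0..1}. ((\<lambda>s. V s * y s) has_integral (z t - z 0)) {0..t}))"

definition vq :: "real \<Rightarrow> ereal \<Rightarrow> real" where
  "vq A q = Sup {y 1 | V y. in_Lq q V \<and> Lq_norm q V \<le> A \<and> is_sol V y}"

end

theory Submission
  imports Defs
begin



lemma ion_sub:
  fixes f :: "real \<Rightarrow> 'b::banach"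
  shows "f integrable_on {0..1} \<Longrightarrow> 0 \<le> x \<Longrightarrow> x \<le> y \<Longrightarrow> y \<le> 1 \<Longrightarrow> f integrable_on {x..y}"
  by (rule integrable_on_subinterval) auto

lemma G_mono:
  fixes a :: "real \<Rightarrow> real"
  assumes "a integrable_on {0..1}" "\<And>x. x\<in>{0..1} \<Longrightarrow> a x \<ge> 0" "0 \<le> x" "x \<le> y" "y \<le> 1"
  shows "integral {0..x} a \<le> integral {0..y} a"
proof -
  have i: "a integrable_on {0..y}" by (rule ion_sub[OF assms(1)]) (use assms in auto)
  have "integral {0..x} a + integral {x..y} a = integral {0..y} a"
    using Henstock_Kurzweil_Integration.integral_combine[OF assms(3,4) i] .
  moreover have "integral {x..y} a \<ge> 0"
    using assms by (intro integral_nonneg integrable_on_subinterval[OF i]) auto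
  ultimately show ?thesis by linarith
qed

lemma prod_absint:
  fixes a g :: "real \<Rightarrow> real"
  assumes "a absolutely_integrable_on {0..1}" "continuous_on {0..1} g"
  shows "(\<lambda>s. a s * g s) absolutely_integrable_on {0..1}"
proof -
  have "(\<lambda>s. g s * a s) absolutely_integrable_on {0..1}"
  proof (rule absolutely_integrable_bounded_measurable_product_real)
    show "g \<in> borel_measurable (lebesgue_on {0..1})"
      by (rule continuous_imp_measurable_on_sets_lebesgue[OF assms(2)]) simp
    show "{0..1::real} \<in> sets lebesgue" by simp
    show "bounded (g ` {0..1})"
      by (rule compact_imp_bounded, rule compact_continuous_image[OF assms(2)]) simp
  qed (rule assms(1))
  then show ?thesis by (simp add: mult.commute)
qed

lemma gronwall_step:
  fixes a g :: "real \<Rightarrow> real"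
  assumes aint: "a absolutely_integrable_on {0..1}" and a0: "\<And>x. x\<in>{0..1} \<Longrightarrow> a x \<ge> 0"
    and gc: "continuous_on {0..1} g" and g0: "\<And>x. x\<in>{0..1} \<Longrightarrow> g x \<ge> 0"
    and hyp: "\<And>t. t\<in>{0..1} \<Longrightarrow> g t \<le> c + integral {0..t} (\<lambda>s. a s * g s)"
    and st: "0 \<le> s" "s \<le> t" "t \<le> 1"
    and D: "\<And>x. x\<in>{0..s} \<Longrightarrow> g x \<le> D"
    and half: "integral {0..t} a - integral {0..s} a \<le> 1/2"
  shows "\<forall>x\<in>{s..t}. g x \<le> 2*c + 2*(D * integral {0..s} a)"
proof -
  have ai: "a integrable_on {0..1}" using aint by (simp add: absolutely_integrable_on_def)
  have agi: "(\<lambda>s. a s * g s) integrable_on {0..1}"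
    using prod_absint[OF aint gc] by (simp add: absolutely_integrable_on_def)
  have gcs: "continuous_on {s..t} g" by (rule continuous_on_subset[OF gc]) (use st in auto)
  obtain xm where xm: "xm \<in> {s..t}" "\<And>y. y\<in>{s..t} \<Longrightarrow> g y \<le> g xm"
    using continuous_attains_sup[OF compact_Icc _ gcs] st by auto
  define M where "M = g xm"
  have M0: "M \<ge> 0" using g0 xm st unfolding M_def by auto
  have "g xm \<le> c + D * integral {0..s} a + M/2"
  proof -
    let ?x = xm
    have x: "s \<le> ?x" "?x \<le> t" using xm by auto
    have i1: "(\<lambda>s. a s * g s) integrable_on {0..?x}"
      by (rule ion_sub[OF agi]) (use x st in auto)
    have split: "integral {0..s} (\<lambda>s. a s * g s) + integral {s..?x} (\<lambda>s. a s * g s)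
        = integral {0..?x} (\<lambda>s. a s * g s)"
      using Henstock_Kurzweil_Integration.integral_combine[OF st(1) x(1) i1] .
    have ais: "a integrable_on {0..s}" by (rule ion_sub[OF ai]) (use st in auto)
    have aisx: "a integrable_on {s..?x}" by (rule ion_sub[OF ai]) (use st x in auto)
    have b1: "integral {0..s} (\<lambda>s. a s * g s) \<le> integral {0..s} (\<lambda>y. a y * D)"
      apply (rule integral_le)
      apply (rule ion_sub[OF agi]) using x st apply auto[3]
       apply (rule integrable_on_mult_left[OF ais])
      subgoal for y using a0[of y] D[of y] st by (intro mult_left_mono) auto
      done
    have b1': "integral {0..s} (\<lambda>y. a y * D) = D * integral {0..s} a"
      using integral_mult_left[of "{0..s}" a D] by (simp only: mult.commute[of _ D])
    have b2: "integral {s..?x} (\<lambda>s. a s * g s) \<le> integral {s..?x} (\<lambda>y. a y * M)"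
      apply (rule integral_le)
      apply (rule ion_sub[OF agi]) using x st apply auto[3]
       apply (rule integrable_on_mult_left[OF aisx])
      subgoal for y using a0[of y] xm(2)[of y] x st unfolding M_def by (intro mult_left_mono) auto
      done
    have b2': "integral {s..?x} (\<lambda>y. a y * M) = M * integral {s..?x} a"
      using integral_mult_left[of "{s..?x}" a M] by (simp only: mult.commute[of _ M])
    have ax: "a integrable_on {0..?x}" by (rule ion_sub[OF ai]) (use st x in auto)
    have "integral {0..s} a + integral {s..?x} a = integral {0..?x} a"
      using Henstock_Kurzweil_Integration.integral_combine[OF st(1) x(1) ax] .
    moreover have "integral {0..?x} a \<le> integral {0..t} a"
      using G_mono[OF ai a0] st x by auto
    ultimately have h12: "integral {s..?x} a \<le> 1/2" using half by linarith
    have "M * integral {s..?x} a \<le> M * (1/2)" using mult_left_mono[OF h12 M0] .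
    then have "M * integral {s..?x} a \<le> M/2" by simp
    moreover have "g ?x \<le> c + integral {0..?x} (\<lambda>s. a s * g s)" using hyp x st by auto
    ultimately show ?thesis using split b1 b1' b2 b2' by linarith
  qed
  then have "M \<le> 2*c + 2*(D * integral {0..s} a)" unfolding M_def by linarith
  then show ?thesis using xm(2) unfolding M_def by (meson atLeastAtMost_iff order_trans)
qed

fun Cg :: "nat \<Rightarrow> real" where
  "Cg 0 = 2"
| "Cg (Suc n) = 2 + real (Suc n) * Cg n"

lemma Cg_pos: "Cg n \<ge> 2"
  by (induction n) (auto intro: add_increasing2)

lemma Cg_mono: "Cg n \<le> Cg (Suc n)"
proof -
  have "Cg n \<le> real (Suc n) * Cg n" using Cg_pos[of n] by (simp add: distrib_right)
  then show ?thesis by simp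
qed

lemma gronwall_levels:
  fixes a g :: "real \<Rightarrow> real"
  assumes aint: "a absolutely_integrable_on {0..1}" and a0: "\<And>x. x\<in>{0..1} \<Longrightarrow> a x \<ge> 0"
    and gc: "continuous_on {0..1} g" and g0: "\<And>x. x\<in>{0..1} \<Longrightarrow> g x \<ge> 0"
    and hyp: "\<And>t. t\<in>{0..1} \<Longrightarrow> g t \<le> c + integral {0..t} (\<lambda>s. a s * g s)"
    and c0: "c \<ge> 0"
  shows "\<forall>t\<in>{0..1}. integral {0..t} a \<le> real n / 2 \<longrightarrow> g t \<le> c * Cg n"
proof (induction n)
  case 0
  show ?case
  proof (intro ballI impI)
    fix t :: real assume t: "t \<in> {0..1}" and Gt: "integral {0..t} a \<le> real 0 / 2"
    have G0: "integral {0..0} a = 0" by simp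
    have g00: "g 0 \<le> c" using hyp[of 0] by simp
    have "\<forall>x\<in>{0..t}. g x \<le> 2*c + 2*(c * integral {0..0} a)"
      apply (rule gronwall_step[OF aint a0 gc g0 hyp])
      using t Gt g00 G0 by auto
    then show "g t \<le> c * Cg 0" using t by (auto simp: mult.commute)
  qed
next
  case (Suc n)
  show ?case
  proof (intro ballI impI)
    fix t :: real assume t: "t \<in> {0..1}" and Gt: "integral {0..t} a \<le> real (Suc n) / 2"
    have ai: "a integrable_on {0..1}" using aint by (simp add: absolutely_integrable_on_def)
    have ccg: "c * Cg n \<le> c * Cg (Suc n)" using c0 Cg_mono by (simp add: mult_left_mono)
    show "g t \<le> c * Cg (Suc n)"
    proof (cases "integral {0..t} a \<le> real n / 2")
      case True
      have "g t \<le> c * Cg n" using Suc.IH t True by blast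
      then show ?thesis using ccg by linarith
    next
      case False
      have ait: "a integrable_on {0..t}" by (rule ion_sub[OF ai]) (use t in auto)
      have cont: "continuous_on {0..t} (\<lambda>x. integral {0..x} a)"
        by (rule indefinite_integral_continuous_1[OF ait])
      obtain s where s: "0 \<le> s" "s \<le> t" "integral {0..s} a = real n / 2"
        using IVT'[of "\<lambda>x. integral {0..x} a" 0 "real n / 2" t] cont False t by auto
      have D: "g x \<le> c * Cg n" if "x \<in> {0..s}" for x
      proof -
        have "integral {0..x} a \<le> integral {0..s} a" using G_mono[OF ai a0] that s t by auto
        then show ?thesis using Suc that s t by auto
      qed
      have "\<forall>x\<in>{s..t}. g x \<le> 2*c + 2*((c * Cg n) * integral {0..s} a)"
        apply (rule gronwall_step[OF aint a0 gc g0 hyp])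
        using s t D Gt by auto
      then have "g t \<le> 2*c + 2*((c * Cg n) * (real n / 2))" using s by auto
      also have "\<dots> = c * (2 + real n * Cg n)" by (simp add: algebra_simps)
      also have "\<dots> \<le> c * Cg (Suc n)"
        using c0 Cg_pos[of n] by (intro mult_left_mono) (auto simp: algebra_simps)
      finally show ?thesis .
    qed
  qed
qed

definition KG :: "real \<Rightarrow> real" where "KG B = Cg (nat \<lceil>2*B\<rceil>)"

lemma gronwall:
  fixes a g :: "real \<Rightarrow> real"
  assumes aint: "a absolutely_integrable_on {0..1}" and a0: "\<And>x. x\<in>{0..1} \<Longrightarrow> a x \<ge> 0"
    and gc: "continuous_on {0..1} g" and g0: "\<And>x. x\<in>{0..1} \<Longrightarrow> g x \<ge> 0"
    and hyp: "\<And>t. t\<in>{0..1} \<Longrightarrow> g t \<le> c + integral {0..t} (\<lambda>s. a s * g s)"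
    and c0: "c \<ge> 0" and B: "integral {0..1} a \<le> B" and t: "t \<in> {0..1}"
  shows "g t \<le> c * KG B"
proof -
  have ai: "a integrable_on {0..1}" using aint by (simp add: absolutely_integrable_on_def)
  have "integral {0..t} a \<le> integral {0..1} a" using G_mono[OF ai a0] t by auto
  also have "\<dots> \<le> real (nat \<lceil>2*B\<rceil>) / 2" using B by linarith
  finally show ?thesis
    using gronwall_levels[OF aint a0 gc g0 hyp c0, of "nat \<lceil>2*B\<rceil>"] t unfolding KG_def by auto
qed




definition solz :: "(real \<Rightarrow> real) \<Rightarrow> (real \<Rightarrow> real) \<Rightarrow> (real \<Rightarrow> real) \<Rightarrow> bool" where
  "solz V y z \<longleftrightarrow> continuous_on {0..1} y \<and> continuous_on {0..1} z \<and>
     y 0 = 0 \<and> z 0 = 1 \<and>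
     (\<lambda>s. V s * y s) absolutely_integrable_on {0..1} \<and>
     (\<forall>t\<in>{0..1}. (z has_integral (y t - y 0)) {0..t}) \<and>
     (\<forall>t\<in>{0..1}. ((\<lambda>s. V s * y s) has_integral (z t - z 0)) {0..t})"

lemma is_sol_iff: "is_sol V y \<longleftrightarrow> (\<exists>z. solz V y z)"
  unfolding is_sol_def solz_def by simp

lemma absint_sub:
  fixes f :: "real \<Rightarrow> real"
  shows "f absolutely_integrable_on {0..1} \<Longrightarrow> 0 \<le> x \<Longrightarrow> x \<le> y \<Longrightarrow> y \<le> 1 \<Longrightarrow> f absolutely_integrable_on {x..y}"
  by (rule absolutely_integrable_on_subinterval) auto

lemma absint_int:
  fixes f :: "real \<Rightarrow> real"
  shows "f absolutely_integrable_on S \<Longrightarrow> f integrable_on S"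
  by (simp add: absolutely_integrable_on_def)

lemma absint_abs:
  fixes f :: "real \<Rightarrow> real"
  shows "f absolutely_integrable_on S \<Longrightarrow> (\<lambda>x. \<bar>f x\<bar>) absolutely_integrable_on S"
  by (rule set_integrable_abs)

lemma lin_gron:
  fixes d e V :: "real \<Rightarrow> real"
  assumes dc: "continuous_on {0..1} d" and ec: "continuous_on {0..1} e"
    and de: "\<And>t. t\<in>{0..1} \<Longrightarrow> (e has_integral d t) {0..t}"
    and eb: "\<And>t. t\<in>{0..1} \<Longrightarrow> \<bar>e t\<bar> \<le> c + integral {0..t} (\<lambda>s. \<bar>V s\<bar> * \<bar>d s\<bar>)"
    and Vi: "V absolutely_integrable_on {0..1}" and VB: "integral {0..1} (\<lambda>x. \<bar>V x\<bar>) \<le> B"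
    and c0: "c \<ge> 0" and t: "t \<in> {0..1}"
  shows "\<bar>d t\<bar> + \<bar>e t\<bar> \<le> c * KG (B+1)"
proof -
  define a where "a = (\<lambda>x. 1 + \<bar>V x\<bar>)"
  define g where "g = (\<lambda>x. \<bar>d x\<bar> + \<bar>e x\<bar>)"
  have Va: "(\<lambda>x. \<bar>V x\<bar>) absolutely_integrable_on {0..1}" using absint_abs[OF Vi] .
  have one: "(\<lambda>x. 1::real) absolutely_integrable_on {0..1::real}"
    by (intro absolutely_integrable_continuous_real continuous_intros)
  have ai: "a absolutely_integrable_on {0..1}"
    unfolding a_def by (rule set_integral_add(1)[OF one Va])
  have gc: "continuous_on {0..1} g" unfolding g_def
    by (intro continuous_intros dc ec)
  have ec': "continuous_on {0..1} (\<lambda>x. \<bar>e x\<bar>)" by (intro continuous_intros ec)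
  have dc': "continuous_on {0..1} (\<lambda>x. \<bar>d x\<bar>)" by (intro continuous_intros dc)
  have Vd: "(\<lambda>s. \<bar>V s\<bar> * \<bar>d s\<bar>) absolutely_integrable_on {0..1}"
    by (rule prod_absint[OF Va dc'])
  have ag: "(\<lambda>s. a s * g s) absolutely_integrable_on {0..1}"
    by (rule prod_absint[OF ai gc])
  have hyp: "g x \<le> c + integral {0..x} (\<lambda>s. a s * g s)" if x: "x \<in> {0..1}" for x
  proof -
    have ex: "e integrable_on {0..x}" using de[OF x] by blast
    have aex: "(\<lambda>x. \<bar>e x\<bar>) integrable_on {0..x}"
      using integrable_continuous_interval[OF continuous_on_subset[OF ec']] x by auto
    have vdx: "(\<lambda>s. \<bar>V s\<bar> * \<bar>d s\<bar>) integrable_on {0..x}"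
      using absint_int[OF absint_sub[OF Vd]] x by auto
    have agx: "(\<lambda>s. a s * g s) integrable_on {0..x}"
      using absint_int[OF absint_sub[OF ag]] x by auto
    have "\<bar>d x\<bar> = norm (integral {0..x} e)" using de[OF x] by (simp add: integral_unique)
    also have "\<dots> \<le> integral {0..x} (\<lambda>x. \<bar>e x\<bar>)"
      by (rule integral_norm_bound_integral[OF ex aex]) simp
    finally have 1: "\<bar>d x\<bar> \<le> integral {0..x} (\<lambda>x. \<bar>e x\<bar>)" .
    have 2: "\<bar>e x\<bar> \<le> c + integral {0..x} (\<lambda>s. \<bar>V s\<bar> * \<bar>d s\<bar>)" using eb[OF x] .
    have "integral {0..x} (\<lambda>x. \<bar>e x\<bar>) + integral {0..x} (\<lambda>s. \<bar>V s\<bar> * \<bar>d s\<bar>)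
        = integral {0..x} (\<lambda>s. \<bar>e s\<bar> + \<bar>V s\<bar> * \<bar>d s\<bar>)"
      by (rule integral_add[OF aex vdx, symmetric])
    also have "\<dots> \<le> integral {0..x} (\<lambda>s. a s * g s)"
    proof (rule integral_le)
      show "(\<lambda>s. \<bar>e s\<bar> + \<bar>V s\<bar> * \<bar>d s\<bar>) integrable_on {0..x}"
        by (rule integrable_add[OF aex vdx])
      show "(\<lambda>s. a s * g s) integrable_on {0..x}" by (rule agx)
      fix s assume "s \<in> {0..x}"
      show "\<bar>e s\<bar> + \<bar>V s\<bar> * \<bar>d s\<bar> \<le> a s * g s"
        unfolding a_def g_def by (simp add: algebra_simps)
    qed
    finally show ?thesis using 1 2 unfolding g_def by linarith
  qed
  have "integral {0..1} a = integral {0..1} (\<lambda>x::real. 1::real) + integral {0..1} (\<lambda>x. \<bar>V x\<bar>)"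
    unfolding a_def by (rule integral_add[OF absint_int[OF one] absint_int[OF Va]])
  also have "\<dots> \<le> B + 1" using VB by simp
  finally have aB: "integral {0..1} a \<le> B + 1" .
  have "g t \<le> c * KG (B+1)"
    by (rule gronwall[OF ai _ gc _ hyp c0 aB t]) (auto simp: a_def g_def)
  then show ?thesis unfolding g_def .
qed

lemma sol_bound:
  assumes s: "solz V y z" and Vi: "V absolutely_integrable_on {0..1}"
    and VB: "integral {0..1} (\<lambda>x. \<bar>V x\<bar>) \<le> B" and t: "t \<in> {0..1}"
  shows "\<bar>y t\<bar> \<le> KG (B+1)"
proof -
  have yc: "continuous_on {0..1} y" and zc: "continuous_on {0..1} z" and y0: "y 0 = 0" and z0: "z 0 = 1"
    and Vy: "(\<lambda>s. V s * y s) absolutely_integrable_on {0..1}"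
    and zy: "\<And>t. t\<in>{0..1} \<Longrightarrow> (z has_integral (y t - y 0)) {0..t}"
    and vy: "\<And>t. t\<in>{0..1} \<Longrightarrow> ((\<lambda>s. V s * y s) has_integral (z t - z 0)) {0..t}"
    using s unfolding solz_def by auto
  have eb: "\<bar>z x\<bar> \<le> 1 + integral {0..x} (\<lambda>s. \<bar>V s\<bar> * \<bar>y s\<bar>)" if x: "x \<in> {0..1}" for x
  proof -
    have "z x = 1 + integral {0..x} (\<lambda>s. V s * y s)" using vy[OF x] z0 by (simp add: integral_unique)
    moreover have "norm (integral {0..x} (\<lambda>s. V s * y s)) \<le> integral {0..x} (\<lambda>s. \<bar>V s\<bar> * \<bar>y s\<bar>)"
    proof (rule integral_norm_bound_integral)
      show "(\<lambda>s. V s * y s) integrable_on {0..x}" using vy[OF x] by blast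
      show "(\<lambda>s. \<bar>V s\<bar> * \<bar>y s\<bar>) integrable_on {0..x}"
        using absint_int[OF absint_sub[OF absint_abs[OF Vy]]] x by (auto simp: abs_mult)
    qed (simp add: abs_mult)
    ultimately show ?thesis by simp
  qed
  have "\<bar>y t\<bar> + \<bar>z t\<bar> \<le> 1 * KG (B+1)"
    by (rule lin_gron[OF yc zc _ eb Vi VB _ t]) (use zy y0 in auto)
  then show ?thesis by simp
qed

lemma cont_dep:
  assumes s1: "solz V y z" and s2: "solz W w r"
    and Vi: "V absolutely_integrable_on {0..1}" and Wi: "W absolutely_integrable_on {0..1}"
    and VB: "integral {0..1} (\<lambda>x. \<bar>V x\<bar>) \<le> B"
    and wK: "\<And>t. t \<in> {0..1} \<Longrightarrow> \<bar>w t\<bar> \<le> K" and K0: "K \<ge> 0" and t: "t \<in> {0..1}"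
  shows "\<bar>y t - w t\<bar> \<le> (K * integral {0..1} (\<lambda>x. \<bar>V x - W x\<bar>)) * KG (B+1)"
proof -
  have yc: "continuous_on {0..1} y" and zc: "continuous_on {0..1} z" and y0: "y 0 = 0" and z0: "z 0 = 1"
    and Vy: "(\<lambda>s. V s * y s) absolutely_integrable_on {0..1}"
    and zy: "\<And>t. t\<in>{0..1} \<Longrightarrow> (z has_integral (y t - y 0)) {0..t}"
    and vy: "\<And>t. t\<in>{0..1} \<Longrightarrow> ((\<lambda>s. V s * y s) has_integral (z t - z 0)) {0..t}"
    using s1 unfolding solz_def by auto
  have wc: "continuous_on {0..1} w" and rc: "continuous_on {0..1} r" and w0: "w 0 = 0" and r0: "r 0 = 1"
    and Ww: "(\<lambda>s. W s * w s) absolutely_integrable_on {0..1}"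
    and rw: "\<And>t. t\<in>{0..1} \<Longrightarrow> (r has_integral (w t - w 0)) {0..t}"
    and ww: "\<And>t. t\<in>{0..1} \<Longrightarrow> ((\<lambda>s. W s * w s) has_integral (r t - r 0)) {0..t}"
    using s2 unfolding solz_def by auto
  define \<delta> where "\<delta> = integral {0..1} (\<lambda>x. \<bar>V x - W x\<bar>)"
  have VWi: "(\<lambda>x. \<bar>V x - W x\<bar>) absolutely_integrable_on {0..1}"
    by (rule absint_abs, rule set_integral_diff(1)[OF Vi Wi])
  have \<delta>0: "\<delta> \<ge> 0" unfolding \<delta>_def by (rule integral_nonneg[OF absint_int[OF VWi]]) simp
  have dc: "continuous_on {0..1} (\<lambda>x. y x - w x)" by (intro continuous_intros yc wc)
  have ec: "continuous_on {0..1} (\<lambda>x. z x - r x)" by (intro continuous_intros zc rc)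
  have dc': "continuous_on {0..1} (\<lambda>x. \<bar>y x - w x\<bar>)" by (intro continuous_intros dc)
  have de: "((\<lambda>x. z x - r x) has_integral (y x - w x)) {0..x}" if x: "x \<in> {0..1}" for x
    using has_integral_diff[OF zy[OF x] rw[OF x]] y0 w0 by simp
  have eb: "\<bar>z x - r x\<bar> \<le> K * \<delta> + integral {0..x} (\<lambda>s. \<bar>V s\<bar> * \<bar>y s - w s\<bar>)"
    if x: "x \<in> {0..1}" for x
  proof -
    have "z x - r x = integral {0..x} (\<lambda>s. V s * y s - W s * w s)"
      using has_integral_diff[OF vy[OF x] ww[OF x]] z0 r0 by (simp add: integral_unique)
    moreover have i1: "(\<lambda>s. \<bar>V s\<bar> * \<bar>y s - w s\<bar>) integrable_on {0..x}"
      using absint_int[OF absint_sub[OF prod_absint[OF absint_abs[OF Vi] dc']]] x by auto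
    have i2: "(\<lambda>s. \<bar>V s - W s\<bar> * K) integrable_on {0..x}"
      using integrable_on_mult_left[OF absint_int[OF absint_sub[OF VWi]]] x by auto
    have "norm (integral {0..x} (\<lambda>s. V s * y s - W s * w s))
        \<le> integral {0..x} (\<lambda>s. \<bar>V s\<bar> * \<bar>y s - w s\<bar> + \<bar>V s - W s\<bar> * K)"
    proof (rule integral_norm_bound_integral)
      show "(\<lambda>s. V s * y s - W s * w s) integrable_on {0..x}"
        using has_integral_diff[OF vy[OF x] ww[OF x]] by blast
      show "(\<lambda>s. \<bar>V s\<bar> * \<bar>y s - w s\<bar> + \<bar>V s - W s\<bar> * K) integrable_on {0..x}"
        by (rule integrable_add[OF i1 i2])
      fix s assume sx: "s \<in> {0..x}"
      have ws: "\<bar>w s\<bar> \<le> K" using wK sx x by auto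
      have "V s * y s - W s * w s = V s * (y s - w s) + (V s - W s) * w s" by (simp add: algebra_simps)
      then have "\<bar>V s * y s - W s * w s\<bar> \<le> \<bar>V s\<bar> * \<bar>y s - w s\<bar> + \<bar>V s - W s\<bar> * \<bar>w s\<bar>"
        by (simp add: abs_mult[symmetric] abs_triangle_ineq)
      also have "\<dots> \<le> \<bar>V s\<bar> * \<bar>y s - w s\<bar> + \<bar>V s - W s\<bar> * K"
        using ws by (simp add: mult_left_mono)
      finally show "norm (V s * y s - W s * w s) \<le> \<bar>V s\<bar> * \<bar>y s - w s\<bar> + \<bar>V s - W s\<bar> * K"
        by simp
    qed
    also have "\<dots> = integral {0..x} (\<lambda>s. \<bar>V s\<bar> * \<bar>y s - w s\<bar>) + integral {0..x} (\<lambda>s. \<bar>V s - W s\<bar> * K)"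
      by (rule integral_add[OF i1 i2])
    also have "integral {0..x} (\<lambda>s. \<bar>V s - W s\<bar> * K) = integral {0..x} (\<lambda>s. \<bar>V s - W s\<bar>) * K"
      by simp
    also have "integral {0..x} (\<lambda>s. \<bar>V s - W s\<bar>) \<le> \<delta>"
      unfolding \<delta>_def using G_mono[OF absint_int[OF VWi], of x 1] x by auto
    then have "integral {0..x} (\<lambda>s. \<bar>V s - W s\<bar>) * K \<le> K * \<delta>"
      using K0 by (simp add: mult.commute mult_left_mono)
    ultimately show ?thesis by simp
  qed
  have c0: "K * \<delta> \<ge> 0" using K0 \<delta>0 by simp
  have "\<bar>y t - w t\<bar> + \<bar>z t - r t\<bar> \<le> (K * \<delta>) * KG (B+1)"
    by (rule lin_gron[OF dc ec de eb Vi VB c0 t])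
  then show ?thesis unfolding \<delta>_def by simp
qed




lemma bm_prod_absint:
  fixes W f :: "real \<Rightarrow> real"
  assumes Wm: "W \<in> borel_measurable (lebesgue_on {0..1})" and Wb: "\<And>x. x \<in> {0..1} \<Longrightarrow> \<bar>W x\<bar> \<le> N"
    and fc: "continuous_on {0..1} f"
  shows "(\<lambda>s. W s * f s) absolutely_integrable_on {0..1}"
proof (rule absolutely_integrable_bounded_measurable_product_real[OF Wm])
  show "{0..1::real} \<in> sets lebesgue" by simp
  show "bounded (W ` {0..1})" unfolding bounded_real by (rule exI[of _ N]) (use Wb in auto)
  show "f absolutely_integrable_on {0..1}" by (rule absolutely_integrable_continuous_real[OF fc])
qed

lemma pow_has_integral:
  fixes t C :: real
  assumes "0 \<le> t"
  shows "((\<lambda>s. C * s^k) has_integral (C * t^(k+1)/(k+1))) {0..t}"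
proof -
  have "((\<lambda>s. C * s^k) has_integral ((\<lambda>s. C * s^(k+1)/(k+1)) t - (\<lambda>s. C * s^(k+1)/(k+1)) 0)) {0..t}"
  proof (rule fundamental_theorem_of_calculus[OF assms])
    fix x assume "x \<in> {0..t}"
    have d: "((\<lambda>s. s^(k+1)) has_field_derivative real (k+1) * x^k) (at x within {0..t})"
      using DERIV_pow[of "k+1" x "{0..t}"] by simp
    have "((\<lambda>s. C * s^(k+1)/(k+1)) has_field_derivative C * (real (k+1) * x^k) / (k+1)) (at x within {0..t})"
      by (intro DERIV_cdivide DERIV_cmult d)
    moreover have "C * (real (k+1) * x^k) / (k+1) = C * x^k" by (simp add: field_simps)
    ultimately have "((\<lambda>s. C * s^(k+1)/(k+1)) has_field_derivative C * x^k) (at x within {0..t})" by simp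
    then show "((\<lambda>s. C * s^(k+1)/(k+1)) has_vector_derivative C * x^k) (at x within {0..t})"
      by (simp add: has_real_derivative_iff_has_vector_derivative)
  qed
  then show ?thesis by simp
qed

lemma int_pow_bound:
  fixes f :: "real \<Rightarrow> real"
  assumes fi: "f integrable_on {0..t}" and t: "0 \<le> t"
    and fb: "\<And>s. s \<in> {0..t} \<Longrightarrow> \<bar>f s\<bar> \<le> C * s^k"
  shows "\<bar>integral {0..t} f\<bar> \<le> C * t^(k+1)/(k+1)"
proof -
  have "norm (integral {0..t} f) \<le> integral {0..t} (\<lambda>s. C * s^k)"
    by (rule integral_norm_bound_integral[OF fi]) (use pow_has_integral[OF t] fb in auto)
  also have "\<dots> = C * t^(k+1)/(k+1)" using pow_has_integral[OF t] by (rule integral_unique)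
  finally show ?thesis by simp
qed

lemma exists_sol:
  fixes W :: "real \<Rightarrow> real"
  assumes Wm: "W \<in> borel_measurable (lebesgue_on {0..1})" and Wb: "\<And>x. x \<in> {0..1} \<Longrightarrow> \<bar>W x\<bar> \<le> N"
  shows "\<exists>y z. solz W y z"
proof -
  have N0: "N \<ge> 0" using Wb[of 0] by auto
  define q :: "nat \<Rightarrow> real \<Rightarrow> real" where
    "q = rec_nat (\<lambda>t. 1) (\<lambda>n qn t. integral {0..t} (\<lambda>r. W r * integral {0..r} qn))"
  have q0: "q 0 = (\<lambda>t. 1)" unfolding q_def by simp
  have qS: "\<And>n. q (Suc n) = (\<lambda>t. integral {0..t} (\<lambda>r. W r * integral {0..r} (q n)))"
    unfolding q_def by simp
  define u where "u = (\<lambda>n t. integral {0..t} (q n))"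
  have P: "continuous_on {0..1} (q n) \<and> (\<forall>t\<in>{0..1}. \<bar>q n t\<bar> \<le> N^n / fact n * t^n)" for n
  proof (induction n)
    case 0 show ?case by (simp add: q0)
  next
    case (Suc n)
    have qc: "continuous_on {0..1} (q n)" and qb: "\<And>t. t\<in>{0..1} \<Longrightarrow> \<bar>q n t\<bar> \<le> N^n / fact n * t^n"
      using Suc.IH by auto
    have qi: "q n integrable_on {0..1}" by (rule integrable_continuous_interval[OF qc])
    define un where "un = (\<lambda>r. integral {0..r} (q n))"
    have uc: "continuous_on {0..1} un" unfolding un_def by (rule indefinite_integral_continuous_1[OF qi])
    have ub: "\<bar>un r\<bar> \<le> (N^n / fact n) * r^(n+1) / (n+1)" if r: "r \<in> {0..1}" for r
      unfolding un_def
    proof (rule int_pow_bound)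
      show "q n integrable_on {0..r}" by (rule ion_sub[OF qi]) (use r in auto)
      show "0 \<le> r" using r by auto
      fix s assume "s \<in> {0..r}" then show "\<bar>q n s\<bar> \<le> N^n / fact n * s^n" using qb[of s] r by auto
    qed
    have wu: "(\<lambda>r. W r * un r) absolutely_integrable_on {0..1}" by (rule bm_prod_absint[OF Wm Wb uc])
    have wui: "(\<lambda>r. W r * un r) integrable_on {0..1}" using absint_int[OF wu] .
    have qS': "q (Suc n) = (\<lambda>t. integral {0..t} (\<lambda>r. W r * un r))" unfolding qS un_def by simp
    have c: "continuous_on {0..1} (q (Suc n))" unfolding qS' by (rule indefinite_integral_continuous_1[OF wui])
    have b: "\<bar>q (Suc n) t\<bar> \<le> N^(Suc n) / fact (Suc n) * t^(Suc n)" if t: "t \<in> {0..1}" for t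
    proof -
      define C where "C = N^(Suc n) / fact (Suc n)"
      have C0: "C \<ge> 0" unfolding C_def using N0 by simp
      have "\<bar>q (Suc n) t\<bar> \<le> C * t^(n+1+1)/(n+1+1)"
        unfolding qS'
      proof (rule int_pow_bound)
        show "(\<lambda>r. W r * un r) integrable_on {0..t}" by (rule ion_sub[OF wui]) (use t in auto)
        show "0 \<le> t" using t by auto
        fix s assume s: "s \<in> {0..t}"
        have "\<bar>W s * un s\<bar> = \<bar>W s\<bar> * \<bar>un s\<bar>" by (simp add: abs_mult)
        also have "\<dots> \<le> N * ((N^n / fact n) * s^(n+1) / (n+1))"
          using Wb[of s] ub[of s] s t by (intro mult_mono) auto
        also have "\<dots> = C * s^(n+1)" unfolding C_def by (simp add: field_simps)
        finally show "\<bar>W s * un s\<bar> \<le> C * s^(n+1)" .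
      qed
      also have "\<dots> \<le> C * t^(n+1)"
      proof -
        have "t^(n+1+1) \<le> t^(n+1)" using t by (intro power_decreasing) auto
        also have "\<dots> \<le> t^(n+1) * (n+1+1)" using mult_left_mono[of 1 "real (n+1+1)" "t^(n+1)"] t by simp
        finally have "t^(n+1+1)/(n+1+1) \<le> t^(n+1)" by (simp add: divide_le_eq)
        then show ?thesis using C0 by (simp add: mult_left_mono divide_le_eq mult.assoc)
      qed
      finally show ?thesis unfolding C_def by simp
    qed
    show ?case using c b by auto
  qed
  have qc: "\<And>n. continuous_on {0..1} (q n)" using P by auto
  have qi: "\<And>n. q n integrable_on {0..1}" using integrable_continuous_interval[OF qc] by auto
  have qb: "\<bar>q n t\<bar> \<le> N^n / fact n" if t: "t \<in> {0..1}" for n t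
  proof -
    have "\<bar>q n t\<bar> \<le> N^n / fact n * t^n" using P t by auto
    also have "\<dots> \<le> N^n / fact n * 1" using t N0 by (intro mult_left_mono) (auto simp: power_le_one)
    finally show ?thesis by simp
  qed
  have uc: "\<And>n. continuous_on {0..1} (u n)"
    unfolding u_def by (rule indefinite_integral_continuous_1[OF qi])
  have ub: "\<bar>u n t\<bar> \<le> N^n / fact n" if t: "t \<in> {0..1}" for n t
  proof -
    have "norm (u n t) \<le> integral {0..t} (\<lambda>s. N^n / fact n)"
      unfolding u_def
      by (rule integral_norm_bound_integral) (use t qb ion_sub[OF qi, of 0 t] in auto)
    also have "\<dots> = N^n / fact n * t" using t by simp
    also have "\<dots> \<le> N^n / fact n" using t N0 mult_left_mono[of t 1 "N^n / fact n"] by simp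
    finally show ?thesis by simp
  qed
  have summ: "summable (\<lambda>n. N^n / fact n)"
    using summable_exp[of N] by (simp add: field_simps)
  define y where "y = (\<lambda>t. \<Sum>n. u n t)"
  define z where "z = (\<lambda>t. \<Sum>n. q n t)"
  have uly: "uniform_limit {0..1} (\<lambda>n x. \<Sum>i<n. u i x) y sequentially"
    unfolding y_def by (rule Weierstrass_m_test[OF _ summ]) (use ub in auto)
  have ulz: "uniform_limit {0..1} (\<lambda>n x. \<Sum>i<n. q i x) z sequentially"
    unfolding z_def by (rule Weierstrass_m_test[OF _ summ]) (use qb in auto)
  have yc: "continuous_on {0..1} y"
    by (rule uniform_limit_theorem[OF _ uly]) (auto intro!: always_eventually continuous_on_sum uc)
  have zc: "continuous_on {0..1} z"
    by (rule uniform_limit_theorem[OF _ ulz]) (auto intro!: always_eventually continuous_on_sum qc)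
  have u0: "u n 0 = 0" for n unfolding u_def by simp
  have y0: "y 0 = 0" unfolding y_def u0 by simp
  have q00: "q n 0 = (if n = 0 then 1 else 0)" for n by (cases n) (auto simp: q0 qS)
  have z0: "z 0 = 1" unfolding z_def q00 using sums_single[of 0 "\<lambda>_. 1::real"] sums_unique by fastforce
  have Wy: "(\<lambda>s. W s * y s) absolutely_integrable_on {0..1}" by (rule bm_prod_absint[OF Wm Wb yc])
  have I1: "(z has_integral (y t - y 0)) {0..t}" if t: "t \<in> {0..1}" for t
  proof -
    have ul: "uniform_limit {0..t} (\<lambda>n x. \<Sum>i<n. q i x) z sequentially"
      by (rule uniform_limit_on_subset[OF ulz]) (use t in auto)
    have cs: "continuous_on {0..t} (\<lambda>x. \<Sum>i<n. q i x)" for n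
      by (intro continuous_on_sum continuous_on_subset[OF qc]) (use t in auto)
    obtain I J where I: "\<And>n. ((\<lambda>x. \<Sum>i<n. q i x) has_integral I n) {0..t}"
      and J: "(z has_integral J) {0..t}" and IJ: "I \<longlonglongrightarrow> J"
      using uniform_limit_integral[OF ul cs] by auto
    have "((\<lambda>x. \<Sum>i<n. q i x) has_integral (\<Sum>i<n. u i t)) {0..t}" for n
      unfolding u_def
      by (rule has_integral_sum) (use ion_sub[OF qi, of 0 t] t in auto)
    then have "I n = (\<Sum>i<n. u i t)" for n using I has_integral_unique by blast
    then have "I = (\<lambda>n. \<Sum>i<n. u i t)" by (intro ext)
    then have "(\<lambda>n. \<Sum>i<n. u i t) \<longlonglongrightarrow> J" using IJ by simp
    moreover have "(\<lambda>n. \<Sum>i<n. u i t) \<longlonglongrightarrow> y t" using tendsto_uniform_limitI[OF uly t] .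
    ultimately have "J = y t" using LIMSEQ_unique by blast
    then show ?thesis using J y0 by simp
  qed
  have I2: "((\<lambda>s. W s * y s) has_integral (z t - z 0)) {0..t}" if t: "t \<in> {0..1}" for t
  proof -
    have Wyi: "(\<lambda>s. W s * y s) integrable_on {0..t}"
      using absint_int[OF absint_sub[OF Wy]] t by auto
    have wui: "(\<lambda>r. W r * u i r) integrable_on {0..t}" for i
      using absint_int[OF absint_sub[OF bm_prod_absint[OF Wm Wb uc]]] t by auto
    have hs: "((\<lambda>s. W s * (\<Sum>i<n. u i s)) has_integral (\<Sum>i<n. q (Suc i) t)) {0..t}" for n
    proof -
      have "((\<lambda>s. \<Sum>i<n. W s * u i s) has_integral (\<Sum>i<n. q (Suc i) t)) {0..t}"
        by (rule has_integral_sum) (auto simp: qS u_def intro!: integrable_integral wui[unfolded u_def])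
      then show ?thesis by (simp add: sum_distrib_left)
    qed
    have lim1: "(\<lambda>n. \<Sum>i<n. q (Suc i) t) \<longlonglongrightarrow> z t - 1"
    proof -
      have "(\<lambda>n. \<Sum>i<Suc n. q i t) \<longlonglongrightarrow> z t"
        using tendsto_uniform_limitI[OF ulz t] by (rule LIMSEQ_Suc)
      moreover have "(\<Sum>i<Suc n. q i t) = 1 + (\<Sum>i<n. q (Suc i) t)" for n
        by (subst sum.lessThan_Suc_shift) (simp add: q0)
      ultimately have "(\<lambda>n. 1 + (\<Sum>i<n. q (Suc i) t)) \<longlonglongrightarrow> z t" by simp
      then have "(\<lambda>n. (1 + (\<Sum>i<n. q (Suc i) t)) - 1) \<longlonglongrightarrow> z t - 1" by (intro tendsto_intros)
      then show ?thesis by simp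
    qed
    have lim2: "(\<lambda>n. \<Sum>i<n. q (Suc i) t) \<longlonglongrightarrow> integral {0..t} (\<lambda>s. W s * y s)"
    proof (rule LIMSEQ_I)
      fix e :: real assume e: "0 < e"
      define \<epsilon> where "\<epsilon> = e / (N + 1)"
      have ep: "\<epsilon> > 0" unfolding \<epsilon>_def using e N0 by simp
      obtain n0 where n0: "\<And>n. n \<ge> n0 \<Longrightarrow> \<forall>x\<in>{0..1}. dist (\<Sum>i<n. u i x) (y x) < \<epsilon>"
        using uniform_limitD[OF uly ep] unfolding eventually_sequentially by blast
      show "\<exists>no. \<forall>n\<ge>no. norm ((\<Sum>i<n. q (Suc i) t) - integral {0..t} (\<lambda>s. W s * y s)) < e"
      proof (intro exI allI impI)
        fix n assume n: "n \<ge> n0"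
        have "(\<Sum>i<n. q (Suc i) t) - integral {0..t} (\<lambda>s. W s * y s)
            = integral {0..t} (\<lambda>s. W s * (\<Sum>i<n. u i s) - W s * y s)"
          using integral_diff[OF has_integral_integrable[OF hs[of n]] Wyi] integral_unique[OF hs[of n]] by simp
        also have "norm \<dots> \<le> integral {0..t} (\<lambda>s. N * \<epsilon>)"
        proof (rule integral_norm_bound_integral)
          show "(\<lambda>s. W s * (\<Sum>i<n. u i s) - W s * y s) integrable_on {0..t}"
            by (rule integrable_diff[OF has_integral_integrable[OF hs[of n]] Wyi])
          show "(\<lambda>s. N * \<epsilon>) integrable_on {0..t}" by (rule integrable_const_ivl)
          fix s assume s: "s \<in> {0..t}"
          then have s1: "s \<in> {0..1}" using t by auto
          have "norm (W s * (\<Sum>i<n. u i s) - W s * y s) = \<bar>W s\<bar> * \<bar>(\<Sum>i<n. u i s) - y s\<bar>"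
            by (simp add: abs_mult[symmetric] right_diff_distrib)
          also have "\<dots> \<le> N * \<epsilon>"
            using n0[OF n] s1 Wb[OF s1] ep by (intro mult_mono) (auto simp: dist_real_def less_imp_le)
          finally show "norm (W s * (\<Sum>i<n. u i s) - W s * y s) \<le> N * \<epsilon>" .
        qed
        also have "\<dots> = N * \<epsilon> * t" using t by simp
        also have "\<dots> \<le> N * \<epsilon>" using t N0 ep by (simp add: mult_left_le)
        also have "\<dots> < e" unfolding \<epsilon>_def using e N0 by (simp add: field_simps)
        finally show "norm ((\<Sum>i<n. q (Suc i) t) - integral {0..t} (\<lambda>s. W s * y s)) < e" .
      qed
    qed
    have "integral {0..t} (\<lambda>s. W s * y s) = z t - 1" using LIMSEQ_unique[OF lim2 lim1] .
    then show ?thesis using integrable_integral[OF Wyi] z0 by simp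
  qed
  have "solz W y z" unfolding solz_def using yc zc y0 z0 Wy I1 I2 by blast
  then show ?thesis by blast
qed




lemma I01_prob: "prob_space I01"
proof (rule prob_spaceI)
  have "emeasure I01 {0..1} = emeasure lebesgue {0..1::real}"
    by (rule emeasure_restrict_space) auto
  also have "\<dots> = 1" by simp
  finally show "emeasure I01 (space I01) = 1" by simp
qed

lemma I01_fin: "finite_measure I01"
  using I01_prob prob_space_def by blast

lemma I01_int_const: "integrable I01 (\<lambda>x. c::real)"
  using finite_measure.integrable_const[OF I01_fin] .

lemma I01_measure: "measure I01 {0..1} = 1"
  using prob_space.prob_space[OF I01_prob] by simp

lemma I01_integral_const: "integral\<^sup>L I01 (\<lambda>x. c) = (c::real)"
  using prob_space.prob_space[OF I01_prob] by simp

lemma Lq1: "in_Lq 1 V \<longleftrightarrow> V absolutely_integrable_on {0..1}"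
  unfolding in_Lq_def using absolutely_integrable_measurable_real[of "{0..1::real}" V] by simp

lemma Lq1_norm: "in_Lq 1 V \<Longrightarrow> Lq_norm 1 V = integral {0..1} (\<lambda>x. \<bar>V x\<bar>)"
proof -
  assume "in_Lq 1 V"
  then have i: "integrable I01 (\<lambda>x. \<bar>V x\<bar>)" unfolding in_Lq_def by simp
  have "Lq_norm 1 V = integral\<^sup>L I01 (\<lambda>x. \<bar>V x\<bar>)"
    unfolding Lq_norm_def using integral_nonneg_AE[of "\<lambda>x. \<bar>V x\<bar>" I01] by simp
  also have "\<dots> = integral {0..1} (\<lambda>x. \<bar>V x\<bar>)"
    by (rule lebesgue_integral_eq_integral[OF i]) simp
  finally show ?thesis .
qed

lemma tangent_powr:
  fixes r x :: real
  assumes r: "r \<ge> 1" and x: "x \<ge> 0"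
  shows "1 + r * (x - 1) \<le> x powr r"
proof (cases "x = 0")
  case True then show ?thesis using r by simp
next
  case False
  then have xp: "x > 0" using x by simp
  have "(\<lambda>x. x powr r) x - (\<lambda>x. x powr r) 1 \<ge> r * (x - 1)"
  proof (rule convex_on_imp_above_tangent[OF powr_convex[OF r]])
    show "connected {0::real<..}" by simp
    show "(1::real) \<in> interior {0<..}" by (simp add: interior_open)
    show "x \<in> {0<..}" using xp by simp
    show "((\<lambda>x. x powr r) has_real_derivative r) (at 1 within {0<..})"
      by (rule derivative_eq_intros refl | simp)+
  qed
  then show ?thesis by simp
qed

lemma norm_mono_real:
  fixes V :: "real \<Rightarrow> real" and p1 p2 :: real
  assumes p1: "1 \<le> p1" and p12: "p1 \<le> p2" and Vm: "V \<in> borel_measurable I01"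
    and i2: "integrable I01 (\<lambda>x. \<bar>V x\<bar> powr p2)"
  shows "integrable I01 (\<lambda>x. \<bar>V x\<bar> powr p1) \<and>
    (integral\<^sup>L I01 (\<lambda>x. \<bar>V x\<bar> powr p1)) powr (1/p1) \<le> (integral\<^sup>L I01 (\<lambda>x. \<bar>V x\<bar> powr p2)) powr (1/p2)"
proof -
  have [measurable]: "V \<in> borel_measurable I01" by (rule Vm)
  have fm: "(\<lambda>x. \<bar>V x\<bar> powr p1) \<in> borel_measurable I01" by measurable
  have i1: "integrable I01 (\<lambda>x. \<bar>V x\<bar> powr p1)"
  proof (rule Bochner_Integration.integrable_bound[OF _ fm])
    show "integrable I01 (\<lambda>x. 1 + \<bar>V x\<bar> powr p2)"
      by (rule Bochner_Integration.integrable_add[OF I01_int_const i2])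
    show "AE x in I01. norm (\<bar>V x\<bar> powr p1) \<le> norm (1 + \<bar>V x\<bar> powr p2)"
    proof (rule AE_I2)
      fix x
      have "\<bar>V x\<bar> powr p1 \<le> 1 + \<bar>V x\<bar> powr p2"
      proof (cases "\<bar>V x\<bar> \<le> 1")
        case True
        then have "\<bar>V x\<bar> powr p1 \<le> 1 powr p1" using p1 by (intro powr_mono2) auto
        then have "\<bar>V x\<bar> powr p1 \<le> 1" by simp
        moreover have "0 \<le> \<bar>V x\<bar> powr p2" by simp
        ultimately show ?thesis by linarith
      next
        case False
        then have "\<bar>V x\<bar> powr p1 \<le> \<bar>V x\<bar> powr p2" using p12 by (intro powr_mono) auto
        then show ?thesis by linarith
      qed
      then show "norm (\<bar>V x\<bar> powr p1) \<le> norm (1 + \<bar>V x\<bar> powr p2)" by simp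
    qed
  qed
  define r where "r = p2 / p1"
  have p1p: "p1 > 0" using p1 by simp
  have r1: "r \<ge> 1" unfolding r_def using p1p p12 by simp
  define I where "I = integral\<^sup>L I01 (\<lambda>x. \<bar>V x\<bar> powr p1)"
  define F where "F = integral\<^sup>L I01 (\<lambda>x. \<bar>V x\<bar> powr p2)"
  have I0: "I \<ge> 0" unfolding I_def by (rule integral_nonneg_AE) simp
  have F0: "F \<ge> 0" unfolding F_def by (rule integral_nonneg_AE) simp
  have fr: "(\<bar>V x\<bar> powr p1) powr r = \<bar>V x\<bar> powr p2" for x
    unfolding powr_powr r_def using p1p by simp
  have IF: "I \<le> F powr (1/r)"
  proof (cases "I = 0")
    case True then show ?thesis by simp
  next
    case False
    then have Ip: "I > 0" using I0 by simp
    have pw: "(1 - r) + (r / I) * (\<bar>V x\<bar> powr p1) \<le> \<bar>V x\<bar> powr p2 / I powr r" for x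
    proof -
      have "1 + r * ((\<bar>V x\<bar> powr p1) / I - 1) \<le> ((\<bar>V x\<bar> powr p1) / I) powr r"
        by (rule tangent_powr[OF r1]) (use Ip in simp)
      also have "\<dots> = \<bar>V x\<bar> powr p2 / I powr r" by (simp add: powr_divide fr)
      finally show ?thesis using Ip by (simp add: algebra_simps)
    qed
    have "integral\<^sup>L I01 (\<lambda>x. (1 - r) + (r / I) * (\<bar>V x\<bar> powr p1))
        \<le> integral\<^sup>L I01 (\<lambda>x. \<bar>V x\<bar> powr p2 / I powr r)"
      by (rule integral_mono_AE, intro Bochner_Integration.integrable_add I01_int_const Bochner_Integration.integrable_mult_right i1,
          intro Bochner_Integration.integrable_divide i2, rule AE_I2, rule pw)
    moreover have "integral\<^sup>L I01 (\<lambda>x. (1 - r) + (r / I) * (\<bar>V x\<bar> powr p1)) = 1"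
      using Ip by (simp add: I01_int_const i1 I01_integral_const I_def[symmetric] I01_measure)
    moreover have "integral\<^sup>L I01 (\<lambda>x. \<bar>V x\<bar> powr p2 / I powr r) = F / I powr r"
      unfolding F_def by simp
    ultimately have "1 \<le> F / I powr r" by linarith
    then have "I powr r \<le> F" using Ip by (simp add: le_divide_eq)
    then have "(I powr r) powr (1/r) \<le> F powr (1/r)" using r1 by (intro powr_mono2) auto
    then show ?thesis using r1 I0 by (simp add: powr_powr)
  qed
  have "I powr (1/p1) \<le> (F powr (1/r)) powr (1/p1)" using IF I0 p1p by (intro powr_mono2) auto
  also have "\<dots> = F powr (1/p2)" unfolding powr_powr r_def using p1p by simp
  finally show ?thesis using i1 unfolding I_def F_def by simp
qed

lemma norm_mono_inf:
  fixes V :: "real \<Rightarrow> real" and p :: real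
  assumes p: "1 \<le> p" and iq: "in_Lq \<infinity> V"
  shows "integrable I01 (\<lambda>x. \<bar>V x\<bar> powr p) \<and>
    (integral\<^sup>L I01 (\<lambda>x. \<bar>V x\<bar> powr p)) powr (1/p) \<le> Lq_norm \<infinity> V"
proof -
  define E where "E = esssup I01 (\<lambda>x. ereal \<bar>V x\<bar>)"
  have Vm: "V \<in> borel_measurable I01" and Einf: "E < \<infinity>" using iq unfolding in_Lq_def E_def by auto
  have [measurable]: "V \<in> borel_measurable I01" by (rule Vm)
  have AE1: "AE x in I01. ereal \<bar>V x\<bar> \<le> E" unfolding E_def by (rule esssup_AE)
  have sp: "emeasure I01 (space I01) \<noteq> 0" using prob_space.emeasure_space_1[OF I01_prob] by simp
  have "esssup I01 (\<lambda>x. ereal 0) \<le> E" unfolding E_def by (rule esssup_mono) auto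
  then have E0: "E \<ge> 0" using esssup_const[OF sp, of "ereal 0"] by (simp add: zero_ereal_def)
  define e where "e = real_of_ereal E"
  have Ee: "E = ereal e" unfolding e_def using E0 Einf by (cases E) auto
  have e0: "e \<ge> 0" using E0 Ee by simp
  have AE2: "AE x in I01. \<bar>V x\<bar> powr p \<le> e powr p"
    using AE1 by eventually_elim (use Ee p in \<open>auto intro!: powr_mono2\<close>)
  have i: "integrable I01 (\<lambda>x. \<bar>V x\<bar> powr p)"
  proof (rule Bochner_Integration.integrable_bound[OF I01_int_const[of "e powr p"]])
    show "(\<lambda>x. \<bar>V x\<bar> powr p) \<in> borel_measurable I01" by measurable
    show "AE x in I01. norm (\<bar>V x\<bar> powr p) \<le> norm (e powr p)" using AE2 by eventually_elim simp
  qed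
  have "integral\<^sup>L I01 (\<lambda>x. \<bar>V x\<bar> powr p) \<le> integral\<^sup>L I01 (\<lambda>x. e powr p)"
    by (rule integral_mono_AE[OF i I01_int_const AE2])
  then have "integral\<^sup>L I01 (\<lambda>x. \<bar>V x\<bar> powr p) \<le> e powr p" by (simp add: I01_integral_const I01_measure)
  then have "(integral\<^sup>L I01 (\<lambda>x. \<bar>V x\<bar> powr p)) powr (1/p) \<le> (e powr p) powr (1/p)"
    using p by (intro powr_mono2) (auto intro: integral_nonneg_AE)
  also have "\<dots> = e" using p e0 by (simp add: powr_powr)
  also have "e = Lq_norm \<infinity> V" unfolding Lq_norm_def E_def[symmetric] e_def by simp
  finally show ?thesis using i by simp
qed

lemma Lq_mono:
  fixes q1 q2 :: ereal
  assumes q1: "1 \<le> q1" and q12: "q1 \<le> q2" and iq: "in_Lq q2 V"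
  shows "in_Lq q1 V \<and> Lq_norm q1 V \<le> Lq_norm q2 V"
proof (cases q1)
  case PInf
  then have "q2 = \<infinity>" using q12 by simp
  then show ?thesis using iq PInf by simp
next
  case MInf then show ?thesis using q1 by simp
next
  case (real p1)
  have p1: "1 \<le> p1" using q1 real by simp
  have Vm: "V \<in> borel_measurable I01" using iq unfolding in_Lq_def by simp
  show ?thesis
  proof (cases q2)
    case PInf
    have "in_Lq (ereal p1) V \<and> Lq_norm (ereal p1) V \<le> Lq_norm \<infinity> V"
      using norm_mono_inf[OF p1, of V] iq Vm PInf
      unfolding in_Lq_def[of "ereal p1"] Lq_norm_def[of "ereal p1"] by simp
    then show ?thesis using PInf real by simp
  next
    case MInf then show ?thesis using q12 real by simp
  next
    case (real p2)
    have p12: "p1 \<le> p2" using q12 real \<open>q1 = ereal p1\<close> by simp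
    have i2: "integrable I01 (\<lambda>x. \<bar>V x\<bar> powr p2)" using iq real unfolding in_Lq_def by simp
    show ?thesis using norm_mono_real[OF p1 p12 Vm i2] Vm real \<open>q1 = ereal p1\<close>
      unfolding in_Lq_def Lq_norm_def by simp
  qed
qed




definition Sq :: "real \<Rightarrow> ereal \<Rightarrow> real set" where
  "Sq A q = {y 1 | V y. in_Lq q V \<and> Lq_norm q V \<le> A \<and> is_sol V y}"

lemma vq_Sq: "vq A q = Sup (Sq A q)" unfolding vq_def Sq_def by simp

lemma Sq_mono: "1 \<le> q1 \<Longrightarrow> q1 \<le> q2 \<Longrightarrow> Sq A q2 \<subseteq> Sq A q1"
  unfolding Sq_def using Lq_mono by fastforce

lemma S1_bdd: "bdd_above (Sq A 1)"
proof (rule bdd_aboveI)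
  fix s assume "s \<in> Sq A 1"
  then obtain V y where s: "s = y 1" and iq: "in_Lq 1 V" and nq: "Lq_norm 1 V \<le> A" and sol: "is_sol V y"
    unfolding Sq_def by blast
  obtain z where sz: "solz V y z" using sol is_sol_iff by blast
  have Vi: "V absolutely_integrable_on {0..1}" using iq Lq1 by blast
  have "integral {0..1} (\<lambda>x. \<bar>V x\<bar>) \<le> A" using nq Lq1_norm[OF iq] by simp
  then have "\<bar>y 1\<bar> \<le> KG (A+1)" using sol_bound[OF sz Vi] by simp
  then show "s \<le> KG (A+1)" using s by simp
qed

lemma Sq_bdd: "1 \<le> q \<Longrightarrow> bdd_above (Sq A q)"
proof -
  assume q: "1 \<le> q"
  show ?thesis by (rule bdd_above_mono[OF S1_bdd[of A] Sq_mono[OF order_refl q]])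
qed

lemma zero_sol: "is_sol (\<lambda>x. 0) (\<lambda>t. t)"
proof -
  have "solz (\<lambda>x. 0) (\<lambda>t. t) (\<lambda>t. 1)"
    unfolding solz_def
  proof (intro conjI ballI)
    show "(\<lambda>s. 0 * s) absolutely_integrable_on {0..1::real}" by simp
    fix t :: real assume t: "t \<in> {0..1}"
    show "((\<lambda>t. 1) has_integral (t - 0)) {0..t}" using has_integral_const_real[of "1::real" 0 t] t by simp
    show "((\<lambda>s. 0 * s) has_integral (1 - 1)) {0..t}" by simp
  qed (auto intro: continuous_intros)
  then show ?thesis using is_sol_iff by blast
qed

lemma Sq_ne: "1 \<le> q \<Longrightarrow> 0 \<le> A \<Longrightarrow> Sq A q \<noteq> {}"
proof -
  assume q: "1 \<le> q" and A: "0 \<le> A"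
  have sp: "emeasure I01 (space I01) \<noteq> 0" using prob_space.emeasure_space_1[OF I01_prob] by simp
  have e0: "esssup I01 (\<lambda>x. ereal \<bar>0\<bar>) = 0" using esssup_const[OF sp, of "ereal 0"] by (simp add: zero_ereal_def)
  have "in_Lq q (\<lambda>x. 0) \<and> Lq_norm q (\<lambda>x. 0) \<le> A"
    unfolding in_Lq_def Lq_norm_def using e0 A by simp
  then have "(\<lambda>t::real. t) 1 \<in> Sq A q" unfolding Sq_def using zero_sol
    by (intro CollectI exI[of _ "\<lambda>x. 0"] exI[of _ "\<lambda>t::real. t"]) simp
  then show ?thesis by blast
qed

lemma vq_mono: "0 \<le> A \<Longrightarrow> 1 \<le> q1 \<Longrightarrow> q1 \<le> q2 \<Longrightarrow> vq A q2 \<le> vq A q1"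
  unfolding vq_Sq
  by (rule cSup_subset_mono[OF Sq_ne Sq_bdd Sq_mono]) auto




lemma bounded_Lq_eventually:
  fixes W :: "real \<Rightarrow> real"
  assumes Wm: "W \<in> borel_measurable I01" and Wb: "\<And>x. x\<in>{0..1} \<Longrightarrow> \<bar>W x\<bar> \<le> N"
    and a: "integral {0..1} (\<lambda>x. \<bar>W x\<bar>) < A"
  shows "\<forall>\<^sub>F q in at_right 1. in_Lq (ereal q) W \<and> Lq_norm (ereal q) W \<le> A"
proof -
  have [measurable]: "W \<in> borel_measurable I01" by (rule Wm)
  define M where "M = max N 1"
  have M1: "M \<ge> 1" unfolding M_def by simp
  have WM: "\<bar>W x\<bar> \<le> M" if "x \<in> {0..1}" for x using Wb[OF that] unfolding M_def by simp
  have iW: "integrable I01 (\<lambda>x. \<bar>W x\<bar>)"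
  proof (rule Bochner_Integration.integrable_bound[OF I01_int_const[of M]])
    show "(\<lambda>x. \<bar>W x\<bar>) \<in> borel_measurable I01" by measurable
    show "AE x in I01. norm \<bar>W x\<bar> \<le> norm M" using WM M1 by (intro AE_I2) auto
  qed
  define a where "a = integral {0..1} (\<lambda>x. \<bar>W x\<bar>)"
  have aL: "integral\<^sup>L I01 (\<lambda>x. \<bar>W x\<bar>) = a" unfolding a_def
    by (rule lebesgue_integral_eq_integral[OF iW]) simp
  have a0: "a \<ge> 0" using aL integral_nonneg_AE[of "\<lambda>x. \<bar>W x\<bar>" I01] by simp
  have key: "in_Lq (ereal q) W \<and> Lq_norm (ereal q) W \<le> (M powr (q-1) * a) powr (1/q)" if q: "q > 1" for q
  proof -
    have iq: "integrable I01 (\<lambda>x. \<bar>W x\<bar> powr q)"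
    proof (rule Bochner_Integration.integrable_bound[OF I01_int_const[of "M powr q"]])
      show "(\<lambda>x. \<bar>W x\<bar> powr q) \<in> borel_measurable I01" by measurable
      show "AE x in I01. norm (\<bar>W x\<bar> powr q) \<le> norm (M powr q)"
        using WM q by (intro AE_I2) (auto intro!: powr_mono2)
    qed
    have pw: "\<bar>W x\<bar> powr q \<le> M powr (q-1) * \<bar>W x\<bar>" if x: "x \<in> {0..1}" for x
    proof -
      have "\<bar>W x\<bar> powr q = \<bar>W x\<bar> powr ((q-1) + 1)" by simp
      also have "\<dots> = \<bar>W x\<bar> powr (q-1) * \<bar>W x\<bar> powr 1" by (rule powr_add)
      also have "\<dots> \<le> M powr (q-1) * \<bar>W x\<bar>"
        using WM[OF x] q by (auto intro!: mult_right_mono powr_mono2)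
      finally show ?thesis .
    qed
    have "integral\<^sup>L I01 (\<lambda>x. \<bar>W x\<bar> powr q) \<le> integral\<^sup>L I01 (\<lambda>x. M powr (q-1) * \<bar>W x\<bar>)"
      by (rule integral_mono_AE[OF iq]) (use iW pw in \<open>auto intro!: AE_I2\<close>)
    also have "\<dots> = M powr (q-1) * a" using aL by simp
    finally have "integral\<^sup>L I01 (\<lambda>x. \<bar>W x\<bar> powr q) \<le> M powr (q-1) * a" .
    then have "(integral\<^sup>L I01 (\<lambda>x. \<bar>W x\<bar> powr q)) powr (1/q) \<le> (M powr (q-1) * a) powr (1/q)"
      using q by (intro powr_mono2) (auto intro: integral_nonneg_AE)
    then show ?thesis using iq unfolding in_Lq_def Lq_norm_def by simp
  qed
  have ev1: "\<forall>\<^sub>F q in at_right 1. q > (1::real)" by (rule eventually_at_right_less)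
  have ev2: "\<forall>\<^sub>F q in at_right 1. (M powr (q-1) * a) powr (1/q) \<le> A"
  proof (cases "a = 0")
    case True
    then show ?thesis using a unfolding a_def by simp
  next
    case False
    then have ap: "a > 0" using a0 by simp
    have "((\<lambda>q. (M powr (q-1) * a) powr (1/q)) \<longlongrightarrow> (M powr (1-1) * a) powr (1/1)) (at_right (1::real))"
      using M1 ap by (intro tendsto_intros) auto
    then have lim: "((\<lambda>q. (M powr (q-1) * a) powr (1/q)) \<longlongrightarrow> a) (at_right (1::real))" using ap M1 by simp
    have "\<forall>\<^sub>F q in at_right 1. (M powr (q-1) * a) powr (1/q) < A"
      using order_tendstoD(2)[OF lim] a unfolding a_def by blast
    then show ?thesis by (rule eventually_mono) simp
  qed
  show ?thesis using ev1 ev2 by eventually_elim (use key in force)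
qed




lemma KG_pos: "KG B > 0"
  unfolding KG_def using Cg_pos[of "nat \<lceil>2*B\<rceil>"] by simp

lemma approx:
  fixes V :: "real \<Rightarrow> real"
  assumes Vi: "V absolutely_integrable_on {0..1}" and VA: "integral {0..1} (\<lambda>x. \<bar>V x\<bar>) \<le> A"
    and A: "A > 0" and sz: "solz V y z" and e: "\<epsilon> > 0"
  shows "\<exists>W w N. W \<in> borel_measurable I01 \<and> (\<forall>x\<in>{0..1}. \<bar>W x\<bar> \<le> N) \<and>
           integral {0..1} (\<lambda>x. \<bar>W x\<bar>) < A \<and> is_sol W w \<and> y 1 - \<epsilon> < w 1"
proof -
  define K where "K = KG (A+1)"
  have K0: "K > 0" unfolding K_def by (rule KG_pos)
  define \<eta> where "\<eta> = \<epsilon> / (K * K)"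
  have \<eta>0: "\<eta> > 0" unfolding \<eta>_def using e K0 by simp
  have Vm: "V \<in> borel_measurable I01" using Vi absolutely_integrable_measurable_real[of "{0..1::real}" V] by simp
  have [measurable]: "V \<in> borel_measurable I01" by (rule Vm)
  have Va: "(\<lambda>x. \<bar>V x\<bar>) integrable_on {0..1}" using absint_int[OF absint_abs[OF Vi]] .
  define T where "T = (\<lambda>(n::nat) x. if \<bar>V x\<bar> \<le> real n then V x else 0)"
  have Tm: "T n \<in> borel_measurable I01" for n unfolding T_def by measurable
  have Tle: "\<bar>T n x\<bar> \<le> \<bar>V x\<bar>" for n x unfolding T_def by auto
  have TN: "\<bar>T n x\<bar> \<le> real n" for n x unfolding T_def by auto
  have Ti: "T n absolutely_integrable_on {0..1}" for n
    by (rule measurable_bounded_by_integrable_imp_absolutely_integrable[OF Tm _ Va]) (auto simp: Tle)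
  have Di: "(\<lambda>x. \<bar>V x - T n x\<bar>) absolutely_integrable_on {0..1}" for n
    by (rule absint_abs, rule set_integral_diff(1)[OF Vi Ti])
  have lim: "(\<lambda>n. integral {0..1} (\<lambda>x. \<bar>V x - T n x\<bar>)) \<longlonglongrightarrow> integral {0..1::real} (\<lambda>x. 0::real)"
  proof (rule dominated_convergence(2)[where f="\<lambda>n x. \<bar>V x - T n x\<bar>" and h="\<lambda>x. \<bar>V x\<bar>" and g="\<lambda>x. 0", OF _ Va])
    show "(\<lambda>x. \<bar>V x - T n x\<bar>) integrable_on {0..1}" for n using absint_int[OF Di] .
    show "norm \<bar>V x - T n x\<bar> \<le> \<bar>V x\<bar>" for n x unfolding T_def by auto
    fix x :: real
    obtain n0 :: nat where n0: "\<bar>V x\<bar> \<le> real n0" using real_arch_simple by blast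
    have "\<forall>\<^sub>F n in sequentially. \<bar>V x - T n x\<bar> = 0"
      unfolding eventually_sequentially T_def using n0 by (intro exI[of _ n0]) auto
    then show "(\<lambda>n. \<bar>V x - T n x\<bar>) \<longlonglongrightarrow> 0" by (rule tendsto_eventually)
  qed
  then have "\<forall>\<^sub>F n in sequentially. integral {0..1} (\<lambda>x. \<bar>V x - T n x\<bar>) < \<eta>/2"
    using \<eta>0 by (intro order_tendstoD(2)) auto
  then obtain n where n: "integral {0..1} (\<lambda>x. \<bar>V x - T n x\<bar>) < \<eta>/2"
    unfolding eventually_sequentially by auto
  define c where "c = min (1/2) (\<eta> / (4*A))"
  have c0: "c > 0" and c1: "c \<le> 1/2" and cA: "c * A \<le> \<eta>/4"
    unfolding c_def using \<eta>0 A by (auto simp: min_def field_simps)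
  define lam where "lam = 1 - c"
  have l0: "lam \<ge> 0" and l1: "lam < 1" unfolding lam_def using c0 c1 by auto
  define W where "W = (\<lambda>x. lam * T n x)"
  have Wm: "W \<in> borel_measurable I01" unfolding W_def using Tm[of n] by measurable
  have WN: "\<bar>W x\<bar> \<le> real n" for x
  proof -
    have "\<bar>W x\<bar> = lam * \<bar>T n x\<bar>" unfolding W_def using l0 by (simp add: abs_mult)
    also have "\<dots> \<le> 1 * real n" using l0 l1 TN[of n x] by (intro mult_mono) auto
    finally show ?thesis by simp
  qed
  have Wi: "W absolutely_integrable_on {0..1}"
    unfolding W_def by (rule set_integrable_mult_right) (rule Ti)
  have Tai: "(\<lambda>x. \<bar>T n x\<bar>) integrable_on {0..1}" using absint_int[OF absint_abs[OF Ti]] .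
  have Tint: "integral {0..1} (\<lambda>x. \<bar>T n x\<bar>) \<le> A"
    using integral_le[OF Tai Va, of] Tle VA by (meson order_trans)
  have Tint0: "integral {0..1} (\<lambda>x. \<bar>T n x\<bar>) \<ge> 0" by (rule integral_nonneg[OF Tai]) simp
  have WA_eq: "integral {0..1} (\<lambda>x. \<bar>W x\<bar>) = lam * integral {0..1} (\<lambda>x. \<bar>T n x\<bar>)"
  proof -
    have "(\<lambda>x. \<bar>W x\<bar>) = (\<lambda>x. lam * \<bar>T n x\<bar>)" unfolding W_def using l0 by (simp add: abs_mult)
    then show ?thesis by simp
  qed
  have WA: "integral {0..1} (\<lambda>x. \<bar>W x\<bar>) < A"
  proof -
    have "lam * integral {0..1} (\<lambda>x. \<bar>T n x\<bar>) \<le> lam * A" by (rule mult_left_mono[OF Tint l0])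
    also have "\<dots> < A" using l1 A by simp
    finally show ?thesis using WA_eq by simp
  qed
  have WAle: "integral {0..1} (\<lambda>x. \<bar>W x\<bar>) \<le> A" using WA by simp
  have VWi: "(\<lambda>x. \<bar>V x - W x\<bar>) integrable_on {0..1}"
    using absint_int[OF absint_abs[OF set_integral_diff(1)[OF Vi Wi]]] .
  have Dn: "(\<lambda>x. \<bar>V x - T n x\<bar>) integrable_on {0..1}" using absint_int[OF Di] .
  have VW: "integral {0..1} (\<lambda>x. \<bar>V x - W x\<bar>) < \<eta>"
  proof -
    have "integral {0..1} (\<lambda>x. \<bar>V x - W x\<bar>) \<le> integral {0..1} (\<lambda>x. \<bar>V x - T n x\<bar> + c * \<bar>T n x\<bar>)"
    proof (rule integral_le[OF VWi])
      show "(\<lambda>x. \<bar>V x - T n x\<bar> + c * \<bar>T n x\<bar>) integrable_on {0..1}"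
        by (intro integrable_add Dn integrable_on_mult_right Tai)
      fix x
      have "V x - W x = (V x - T n x) + c * T n x" unfolding W_def lam_def by (simp add: algebra_simps)
      then have "\<bar>V x - W x\<bar> \<le> \<bar>V x - T n x\<bar> + \<bar>c * T n x\<bar>"
        by (metis abs_triangle_ineq)
      then show "\<bar>V x - W x\<bar> \<le> \<bar>V x - T n x\<bar> + c * \<bar>T n x\<bar>"
        using c0 by (simp add: abs_mult)
    qed
    also have "\<dots> = integral {0..1} (\<lambda>x. \<bar>V x - T n x\<bar>) + c * integral {0..1} (\<lambda>x. \<bar>T n x\<bar>)"
      by (simp add: integral_add[OF Dn integrable_on_mult_right[OF Tai]])
    also have "\<dots> < \<eta>/2 + \<eta>/4"
    proof -
      have "c * integral {0..1} (\<lambda>x. \<bar>T n x\<bar>) \<le> c * A" using c0 Tint by (intro mult_left_mono) auto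
      then show ?thesis using n cA by linarith
    qed
    also have "\<dots> < \<eta>" using \<eta>0 by simp
    finally show ?thesis .
  qed
  obtain w r where sw: "solz W w r" using exists_sol[OF Wm, of "real n"] WN by blast
  have wK: "\<bar>w t\<bar> \<le> K" if "t \<in> {0..1}" for t unfolding K_def by (rule sol_bound[OF sw Wi WAle that])
  have "\<bar>y 1 - w 1\<bar> \<le> (K * integral {0..1} (\<lambda>x. \<bar>V x - W x\<bar>)) * KG (A+1)"
    by (rule cont_dep[OF sz sw Vi Wi VA wK]) (use K0 in auto)
  also have "\<dots> = K * K * integral {0..1} (\<lambda>x. \<bar>V x - W x\<bar>)" unfolding K_def by simp
  also have "\<dots> < K * K * \<eta>" using VW K0 by simp
  also have "\<dots> = \<epsilon>" unfolding \<eta>_def using K0 by simp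
  finally have "y 1 - \<epsilon> < w 1" by linarith
  then show ?thesis using Wm WN WA sw is_sol_iff by blast
qed




theorem mainTheorem11:
  fixes A :: real
  assumes "A > 0"
  shows "(\<forall>q1 q2. 1 \<le> q1 \<longrightarrow> q1 \<le> q2 \<longrightarrow> vq A q2 \<le> vq A q1)
         \<and> ((\<lambda>q::real. vq A (ereal q)) \<longlongrightarrow> vq A 1) (at_right 1)"
proof
  have A0: "0 \<le> A" using assms by simp
  show "\<forall>q1 q2. 1 \<le> q1 \<longrightarrow> q1 \<le> q2 \<longrightarrow> vq A q2 \<le> vq A q1"
    using vq_mono[OF A0] by blast
  have ev1: "\<forall>\<^sub>F q in at_right 1. q > (1::real)" by (rule eventually_at_right_less)
  show "((\<lambda>q::real. vq A (ereal q)) \<longlongrightarrow> vq A 1) (at_right 1)"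
  proof (rule order_tendstoI)
    fix a assume a: "a < vq A 1"
    then have "a < Sup (Sq A 1)" by (simp add: vq_Sq)
    then obtain s where s: "s \<in> Sq A 1" "a < s" using less_cSupD[OF Sq_ne[OF order_refl A0]] by blast
    then obtain V y where sy: "s = y 1" and iq: "in_Lq 1 V" and nq: "Lq_norm 1 V \<le> A" and sol: "is_sol V y"
      unfolding Sq_def by blast
    obtain z where sz: "solz V y z" using sol is_sol_iff by blast
    have Vi: "V absolutely_integrable_on {0..1}" using iq Lq1 by blast
    have VA: "integral {0..1} (\<lambda>x. \<bar>V x\<bar>) \<le> A" using nq Lq1_norm[OF iq] by simp
    obtain W w N where Wm: "W \<in> borel_measurable I01" and WN: "\<forall>x\<in>{0..1}. \<bar>W x\<bar> \<le> N"
      and WA: "integral {0..1} (\<lambda>x. \<bar>W x\<bar>) < A" and sw: "is_sol W w" and wy: "y 1 - (s - a) < w 1"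
      using approx[OF Vi VA assms sz, of "s - a"] s by auto
    have ev2: "\<forall>\<^sub>F q in at_right 1. in_Lq (ereal q) W \<and> Lq_norm (ereal q) W \<le> A"
      by (rule bounded_Lq_eventually[OF Wm _ WA]) (use WN in auto)
    show "\<forall>\<^sub>F q in at_right 1. a < vq A (ereal q)"
      using ev1 ev2
    proof eventually_elim
      case (elim q)
      then have "w 1 \<in> Sq A (ereal q)" unfolding Sq_def using sw by blast
      moreover have "bdd_above (Sq A (ereal q))" by (rule Sq_bdd) (use elim in simp)
      ultimately have "w 1 \<le> vq A (ereal q)" unfolding vq_Sq by (rule cSup_upper)
      then show ?case using wy sy by simp
    qed
  next
    fix a assume a: "vq A 1 < a"
    show "\<forall>\<^sub>F q in at_right 1. vq A (ereal q) < a"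
      using ev1
    proof eventually_elim
      case (elim q)
      have "vq A (ereal q) \<le> vq A 1" by (rule vq_mono[OF A0]) (use elim in auto)
      then show ?case using a by simp
    qed
  qed
qed


end
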